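(* Let $n\ge 2$ and let $D$ be a domain in $\mathbb{R}^n$ with at least two boundary points. Suppose that $x_0\in D$, $0<t<1$, and $y\in B^n(x_0,t\,d(x_0,\partial D))$. Then $$\frac{1}{C'}\leq\frac{\lambda'_D(x_0)}{\lambda'_D(y)}\leq C',\qquad\text{where } C'=\frac{1+\log\frac{1}{1-t}}{1-t}.$$
   Context: $B^n(x,r)=\{y\in\mathbb{R}^n:|y-x|<r\}$ and $d(z,\partial D)=\inf\{|z-a|:a\in\partial D\}$. For $z\in D$, $$\frac{1}{\lambda'_D(z)}=\inf\Big\{|z-a|\Big(1+\Big|\log\frac{|a-b|}{|z-a|}\Big|\Big): a,b\in\partial D\Big\}$$ (with the convention that the expression equals $+\infty$ when $a=b$). *)

theory Defs
  imports "HOL-Analysis.Analysis"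
begin

text \<open>The quantity 1/lambda'_D(z): infimum over boundary pairs a, b (a = b contributes +infinity,
  hence is excluded) of |z-a| (1 + |log(|a-b|/|z-a|)|).\<close>
definition lambda_inv :: "'a::euclidean_space set \<Rightarrow> 'a \<Rightarrow> real" where
  "lambda_inv D z = Inf {dist z a * (1 + \<bar>ln (dist a b / dist z a)\<bar>) | a b.
        a \<in> frontier D \<and> b \<in> frontier D \<and> a \<noteq> b}"

definition lambda' :: "'a::euclidean_space set \<Rightarrow> 'a \<Rightarrow> real" where
  "lambda' D z = 1 / lambda_inv D z"

end

theory Submission
  imports Defs
begin

lemma aux_r1:
  fixes r t :: real
  assumes "0 < r" "1 - t \<le> r" "r \<le> 1 + t" "0 < t" "t < 1"
  shows "r * (1 + \<bar>ln r\<bar>) \<le> (1 + ln (1 / (1 - t))) / (1 - t)"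
proof (cases "r \<le> 1")
  case True
  have "ln (1/r) \<le> 1/r - 1" using assms by (intro ln_le_minus_one) auto
  hence "- ln r \<le> 1/r - 1" using assms by (simp add: ln_div)
  hence "r * (1 + \<bar>ln r\<bar>) \<le> r * (1/r)" using True assms
    by (intro mult_left_mono) (auto simp: abs_if)
  also have "\<dots> = 1" using assms by simp
  also have "1 \<le> (1 + ln (1 / (1 - t))) / (1 - t)"
  proof -
    have "ln (1/(1-t)) \<ge> 0" using assms by simp
    moreover have "1 - t \<le> 1" using assms by simp
    ultimately show ?thesis using assms by (simp add: field_simps)
  qed
  finally show ?thesis .
next
  case False
  have h0: "(1+t)*(1-t) \<le> 1" by (simp add: algebra_simps)
  have h1: "1 + t \<le> 1 / (1 - t)" using assms h0 by (simp add: field_simps)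
  hence r1: "r \<le> 1/(1-t)" using assms by linarith
  have "ln r \<le> ln (1/(1-t))" using r1 assms by (intro ln_mono) auto
  hence "1 + \<bar>ln r\<bar> \<le> 1 + ln (1/(1-t))" using False by simp
  hence "r * (1 + \<bar>ln r\<bar>) \<le> (1/(1-t)) * (1 + ln (1/(1-t)))"
    using r1 False assms by (intro mult_mono) auto
  thus ?thesis by simp
qed

lemma aux_r2:
  fixes r t :: real
  assumes "0 < r" "1 - t \<le> r" "r \<le> 1 + t" "0 < t" "t < 1"
  shows "(1/r) * (1 + \<bar>ln r\<bar>) \<le> (1 + ln (1 / (1 - t))) / (1 - t)"
proof (cases "r \<le> 1")
  case False
  have "ln r \<le> r - 1" using assms by (intro ln_le_minus_one) auto
  hence "(1 + \<bar>ln r\<bar>) \<le> r" using False by simp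
  hence "(1/r) * (1 + \<bar>ln r\<bar>) \<le> (1/r) * r" using assms by (intro mult_left_mono) auto
  also have "\<dots> = 1" using assms by simp
  also have "1 \<le> (1 + ln (1 / (1 - t))) / (1 - t)"
  proof -
    have "ln (1/(1-t)) \<ge> 0" using assms by simp
    moreover have "1 - t \<le> 1" using assms by simp
    ultimately show ?thesis using assms by (simp add: field_simps)
  qed
  finally show ?thesis .
next
  case True
  have r1: "1/r \<le> 1/(1-t)" using assms by (intro divide_left_mono) auto
  have "ln (1/r) \<le> ln (1/(1-t))" using r1 assms by (intro ln_mono) auto
  moreover have "\<bar>ln r\<bar> = ln (1/r)" using True assms by (simp add: ln_div)
  ultimately have "1 + \<bar>ln r\<bar> \<le> 1 + ln (1/(1-t))" by simp
  hence "(1/r) * (1 + \<bar>ln r\<bar>) \<le> (1/(1-t)) * (1 + ln (1/(1-t)))"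
    using r1 assms by (intro mult_mono) auto
  thus ?thesis by simp
qed

lemma distrib_left_mult_1: "(1 + (a::real)) * (1 + b) = 1 + a + b + a * b"
  by (simp add: algebra_simps)

lemma aux_key:
  fixes p q c t :: real
  assumes "0 < p" "0 < q" "0 < c" "(1-t) * p \<le> q" "q \<le> (1+t) * p" "0 < t" "t < 1"
  shows "q * (1 + \<bar>ln (c/q)\<bar>) \<le> (1 + ln (1 / (1 - t))) / (1 - t) * (p * (1 + \<bar>ln (c/p)\<bar>))"
    and "p * (1 + \<bar>ln (c/p)\<bar>) \<le> (1 + ln (1 / (1 - t))) / (1 - t) * (q * (1 + \<bar>ln (c/q)\<bar>))"
proof -
  define r where "r = q / p"
  have r0: "0 < r" using assms by (simp add: r_def)
  have rb: "1 - t \<le> r" "r \<le> 1 + t" using assms by (simp_all add: r_def field_simps)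
  have q: "q = p * r" using assms by (simp add: r_def)
  have e1: "ln (c/q) = ln (c/p) - ln r" using assms r0 by (simp add: q ln_div ln_mult)
  have A: "\<bar>ln (c/q)\<bar> \<le> \<bar>ln (c/p)\<bar> + \<bar>ln r\<bar>" unfolding e1 by linarith
  have B: "\<bar>ln (c/p)\<bar> \<le> \<bar>ln (c/q)\<bar> + \<bar>ln r\<bar>" unfolding e1 by linarith
  let ?C = "(1 + ln (1 / (1 - t))) / (1 - t)"
  have "q * (1 + \<bar>ln (c/q)\<bar>) \<le> q * ((1 + \<bar>ln r\<bar>) * (1 + \<bar>ln (c/p)\<bar>))"
    using A assms mult_nonneg_nonneg[of "\<bar>ln r\<bar>" "\<bar>ln (c/p)\<bar>"] distrib_left_mult_1[of "\<bar>ln r\<bar>" "\<bar>ln (c/p)\<bar>"] by (intro mult_left_mono) linarith+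
  also have "\<dots> = p * (r * (1 + \<bar>ln r\<bar>)) * (1 + \<bar>ln (c/p)\<bar>)" by (simp add: q)
  also have "\<dots> \<le> p * ?C * (1 + \<bar>ln (c/p)\<bar>)"
    using aux_r1[OF r0 rb assms(6,7)] assms by (intro mult_right_mono mult_left_mono) auto
  finally show "q * (1 + \<bar>ln (c/q)\<bar>) \<le> ?C * (p * (1 + \<bar>ln (c/p)\<bar>))" by (simp add: ac_simps)
  have "p * (1 + \<bar>ln (c/p)\<bar>) \<le> p * ((1 + \<bar>ln r\<bar>) * (1 + \<bar>ln (c/q)\<bar>))"
    using B assms mult_nonneg_nonneg[of "\<bar>ln r\<bar>" "\<bar>ln (c/q)\<bar>"] distrib_left_mult_1[of "\<bar>ln r\<bar>" "\<bar>ln (c/q)\<bar>"] by (intro mult_left_mono) linarith+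
  also have "\<dots> = q * ((1/r) * (1 + \<bar>ln r\<bar>)) * (1 + \<bar>ln (c/q)\<bar>)" using r0 by (simp add: q)
  also have "\<dots> \<le> q * ?C * (1 + \<bar>ln (c/q)\<bar>)"
    using aux_r2[OF r0 rb assms(6,7)] assms by (intro mult_right_mono mult_left_mono) auto
  finally show "p * (1 + \<bar>ln (c/p)\<bar>) \<le> ?C * (q * (1 + \<bar>ln (c/q)\<bar>))" by (simp add: ac_simps)
qed

theorem lemma9:
  fixes D :: "'a::euclidean_space set" and x0 y :: 'a and t :: real
  assumes "DIM('a) \<ge> 2"
    and "open D" and "connected D"
    and "\<exists>a b. a \<in> frontier D \<and> b \<in> frontier D \<and> a \<noteq> b"
    and "x0 \<in> D" and "0 < t" and "t < 1"
    and "y \<in> ball x0 (t * infdist x0 (frontier D))"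
  shows "1 / ((1 + ln (1 / (1 - t))) / (1 - t)) \<le> lambda' D x0 / lambda' D y
         \<and> lambda' D x0 / lambda' D y \<le> (1 + ln (1 / (1 - t))) / (1 - t)"
proof -
  define d where "d = infdist x0 (frontier D)"
  define C where "C = (1 + ln (1 / (1 - t))) / (1 - t)"
  define F where "F = (\<lambda>(z::'a) a b. dist z a * (1 + \<bar>ln (dist a b / dist z a)\<bar>))"
  define S where "S = (\<lambda>z. {F z a b | a b. a \<in> frontier D \<and> b \<in> frontier D \<and> a \<noteq> b})"
  have LI: "lambda_inv D z = Inf (S z)" for z unfolding lambda_inv_def S_def F_def by simp
  obtain a0 b0 where ab0: "a0 \<in> frontier D" "b0 \<in> frontier D" "a0 \<noteq> b0" using assms(4) by blast
  have Sne: "S z \<noteq> {}" for z unfolding S_def using ab0 by blast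
  have F0: "F z a b \<ge> 0" for z a b unfolding F_def by simp
  have Sbdd: "bdd_below (S z)" for z unfolding S_def bdd_below_def using F0 by blast
  have x0nf: "x0 \<notin> frontier D" using assms(2,5) by (simp add: frontier_def interior_open)
  have dpos: "d > 0" unfolding d_def
    using infdist_pos_not_in_closed[OF frontier_closed _ x0nf] ab0 by blast
  have dy: "dist x0 y < t * d" using assms(8) by (simp add: d_def)
  have C0: "C > 0" unfolding C_def using assms(6,7) by (simp add: add_pos_nonneg)
  have ge: "dist x0 a \<ge> d" if "a \<in> frontier D" for a unfolding d_def using infdist_le[OF that] .
  have bnd: "(1-t) * dist x0 a \<le> dist y a \<and> dist y a \<le> (1+t) * dist x0 a" if "a \<in> frontier D" for a
  proof -
    have "dist x0 a \<le> dist x0 y + dist y a" "dist y a \<le> dist y x0 + dist x0 a" by (rule dist_triangle)+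
    moreover have "t * d \<le> t * dist x0 a" using ge[OF that] assms(6) by simp
    ultimately show ?thesis using dy by (simp add: dist_commute algebra_simps)
  qed
  have px: "dist x0 a > 0" if "a \<in> frontier D" for a using ge[OF that] dpos by linarith
  have py: "dist y a > 0" if "a \<in> frontier D" for a
  proof -
    have "(1-t) * dist x0 a > 0" using px[OF that] assms(7) by simp
    thus ?thesis using bnd[OF that] by linarith
  qed
  have K1: "F y a b \<le> C * F x0 a b" and K2: "F x0 a b \<le> C * F y a b"
    if "a \<in> frontier D" "b \<in> frontier D" "a \<noteq> b" for a b
  proof -
    have c: "dist a b > 0" using that by simp
    show "F y a b \<le> C * F x0 a b" unfolding F_def C_def
      using aux_key(1)[OF px[OF that(1)] py[OF that(1)] c _ _ assms(6,7)] bnd[OF that(1)] by blast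
    show "F x0 a b \<le> C * F y a b" unfolding F_def C_def
      using aux_key(2)[OF px[OF that(1)] py[OF that(1)] c _ _ assms(6,7)] bnd[OF that(1)] by blast
  qed
  define Lx where "Lx = Inf (S x0)"
  define Ly where "Ly = Inf (S y)"
  have Lxpos: "Lx > 0"
  proof -
    have "d \<le> Lx" unfolding Lx_def
    proof (rule cInf_greatest[OF Sne])
      fix e assume "e \<in> S x0"
      then obtain a b where e: "e = F x0 a b" "a \<in> frontier D" by (auto simp: S_def)
      have "dist x0 a * 1 \<le> dist x0 a * (1 + \<bar>ln (dist a b / dist x0 a)\<bar>)"
        by (intro mult_left_mono) auto
      thus "d \<le> e" using e ge[OF e(2)] unfolding F_def by simp
    qed
    thus ?thesis using dpos by simp
  qed
  have A1: "Ly / C \<le> Lx" unfolding Lx_def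
  proof (rule cInf_greatest[OF Sne])
    fix e assume "e \<in> S x0"
    then obtain a b where e: "e = F x0 a b" "a \<in> frontier D" "b \<in> frontier D" "a \<noteq> b"
      by (auto simp: S_def)
    have "F y a b \<in> S y" using e unfolding S_def by blast
    hence "Ly \<le> F y a b" unfolding Ly_def by (rule cInf_lower[OF _ Sbdd])
    also have "\<dots> \<le> C * e" using K1[OF e(2-4)] e(1) by simp
    finally show "Ly / C \<le> e" using C0 by (simp add: field_simps)
  qed
  have A2: "Lx / C \<le> Ly" unfolding Ly_def
  proof (rule cInf_greatest[OF Sne])
    fix e assume "e \<in> S y"
    then obtain a b where e: "e = F y a b" "a \<in> frontier D" "b \<in> frontier D" "a \<noteq> b"
      by (auto simp: S_def)
    have "F x0 a b \<in> S x0" using e unfolding S_def by blast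
    hence "Lx \<le> F x0 a b" unfolding Lx_def by (rule cInf_lower[OF _ Sbdd])
    also have "\<dots> \<le> C * e" using K2[OF e(2-4)] e(1) by simp
    finally show "Lx / C \<le> e" using C0 by (simp add: field_simps)
  qed
  have Lypos: "Ly > 0" using A2 Lxpos C0 by (smt (verit) divide_pos_pos)
  have eq: "lambda' D x0 / lambda' D y = Ly / Lx"
    unfolding lambda'_def LI Lx_def[symmetric] Ly_def[symmetric] using Lxpos Lypos by simp
  have "Ly / Lx \<le> C" using A1 C0 Lxpos by (simp add: field_simps)
  moreover have "1 / C \<le> Ly / Lx" using A2 C0 Lxpos by (simp add: field_simps)
  ultimately show ?thesis unfolding eq C_def by simp
qed

end
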